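(* Let $-\infty\le a<b\le\infty$, let $f,g$ be differentiable on $(a,b)$ with $g'\ne0$ on $(a,b)$, and suppose there is $c\in(a,b)$ such that either (I) $f'/g'$ is strictly increasing on $(a,c)$ and strictly decreasing on $(c,b)$, or (II) $f'/g'$ is strictly decreasing on $(a,c)$ and strictly increasing on $(c,b)$. (i) Suppose $\lim_{x\to a^+}f(x)=\lim_{x\to a^+}g(x)=0$ and $\lim_{x\to a^+}f(x)/g(x)=\lambda\in\mathbb R$. In case (I), $f(x)/g(x)>\lambda$ for all $x\in(a,b)$ if and only if $\lim_{x\to b^-}f(x)/g(x)\ge\lambda$; in case (II), $f(x)/g(x)<\lambda$ for all $x\in(a,b)$ if and only if $\lim_{x\to b^-}f(x)/g(x)\le\lambda$. (ii) Suppose $\lim_{x\to b^-}f(x)=\lim_{x\to b^-}g(x)=0$ and $\lim_{x\to b^-}f(x)/g(x)=\lambda\in\mathbb R$. In case (I), $f(x)/g(x)>\lambda$ for all $x\in(a,b)$ if and only if $\lim_{x\to a^+}f(x)/g(x)\ge\lambda$; in case (II), $f(x)/g(x)<\lambda$ for all $x\in(a,b)$ if and only if $\lim_{x\to a^+}f(x)/g(x)\le\lambda$. (The relevant one-sided limits of $f/g$ exist in $[-\infty,\infty]$ under these hypotheses.) *)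

theory Defs
  imports "HOL-Analysis.Analysis"
begin

definition eint :: "ereal \<Rightarrow> ereal \<Rightarrow> real set" where
  "eint a b = {x::real. a < ereal x \<and> ereal x < b}"

definition at_right_ereal :: "ereal \<Rightarrow> real filter" where
  "at_right_ereal a = (if a = -\<infinity> then at_bot else at_right (real_of_ereal a))"

definition at_left_ereal :: "ereal \<Rightarrow> real filter" where
  "at_left_ereal b = (if b = \<infinity> then at_top else at_left (real_of_ereal b))"

definition strictly_incr_on :: "real set \<Rightarrow> (real \<Rightarrow> real) \<Rightarrow> bool" where
  "strictly_incr_on S h \<longleftrightarrow> (\<forall>x\<in>S. \<forall>y\<in>S. x < y \<longrightarrow> h x < h y)"

definition strictly_decr_on :: "real set \<Rightarrow> (real \<Rightarrow> real) \<Rightarrow> bool" where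
  "strictly_decr_on S h \<longleftrightarrow> (\<forall>x\<in>S. \<forall>y\<in>S. x < y \<longrightarrow> h x > h y)"

end

theory Submission
  imports Defs
begin

lemma ev_right:
  assumes "a < ereal z"
  shows "eventually (\<lambda>y. a < ereal y \<and> y < z) (at_right_ereal a)"
proof (cases "a = -\<infinity>")
  case True
  then show ?thesis unfolding at_right_ereal_def
    by (auto simp: eventually_at_bot_dense intro!: exI[of _ z])
next
  case False
  then obtain r where r: "a = ereal r" using assms by (cases a) auto
  then have "r < z" using assms by simp
  from eventually_at_right_real[OF this] show ?thesis
    unfolding at_right_ereal_def r by (auto elim!: eventually_mono)
qed

lemma ev_left:
  assumes "ereal z < b"
  shows "eventually (\<lambda>y. ereal y < b \<and> z < y) (at_left_ereal b)"
proof (cases "b = \<infinity>")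
  case True
  then show ?thesis unfolding at_left_ereal_def
    by (auto simp: eventually_at_top_dense intro!: exI[of _ z])
next
  case False
  then obtain r where r: "b = ereal r" using assms by (cases b) auto
  then have "z < r" using assms by simp
  from eventually_at_left_real[OF this] show ?thesis
    unfolding at_left_ereal_def r by (auto elim!: eventually_mono)
qed

lemma nb_right: "a \<noteq> \<infinity> \<Longrightarrow> at_right_ereal a \<noteq> bot"
  by (auto simp: at_right_ereal_def)

lemma nb_left: "b \<noteq> -\<infinity> \<Longrightarrow> at_left_ereal b \<noteq> bot"
  by (auto simp: at_left_ereal_def)

lemma refl_right: "b \<noteq> -\<infinity> \<Longrightarrow> at_right_ereal (-b) = filtermap uminus (at_left_ereal b)"
  by (cases b) (auto simp: at_right_ereal_def at_left_ereal_def at_bot_mirror at_right_minus)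

lemma refl_left: "a \<noteq> \<infinity> \<Longrightarrow> at_left_ereal (-a) = filtermap uminus (at_right_ereal a)"
  by (cases a) (auto simp: at_right_ereal_def at_left_ereal_def at_top_mirror at_left_minus)

lemma refl_eint: "x \<in> eint (-b) (-a) \<longleftrightarrow> -x \<in> eint a b"
  by (cases a; cases b) (auto simp: eint_def)


lemma tr1: "a < ereal y \<Longrightarrow> y \<le> x \<Longrightarrow> a < ereal (x::real)"
  using less_le_trans[of a "ereal y" "ereal x"] by simp

lemma tr2: "ereal y < b \<Longrightarrow> x \<le> y \<Longrightarrow> ereal (x::real) < b"
  using le_less_trans[of "ereal x" "ereal y" b] by simp

lemma ex_left: "x \<in> eint a b \<Longrightarrow> \<exists>z. z \<in> eint a b \<and> z < x"
proof -
  assume x: "x \<in> eint a b"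
  then have "a < ereal x" "a \<noteq> \<infinity>" by (auto simp: eint_def)
  from eventually_happens'[OF nb_right[OF this(2)] ev_right[OF this(1)]] x show ?thesis
    by (auto simp: eint_def) (metis tr2 less_imp_le)
qed

lemma ex_right: "x \<in> eint a b \<Longrightarrow> \<exists>z. z \<in> eint a b \<and> x < z"
proof -
  assume x: "x \<in> eint a b"
  then have "ereal x < b" "b \<noteq> -\<infinity>" by (auto simp: eint_def)
  from eventually_happens'[OF nb_left[OF this(2)] ev_left[OF this(1)]] x show ?thesis
    by (auto simp: eint_def) (metis tr1 less_imp_le)
qed

lemma mono_lim:
  assumes "ereal z < b" "\<And>x y. z < x \<Longrightarrow> x < y \<Longrightarrow> ereal y < b \<Longrightarrow> u x \<le> u y"
  shows "\<exists>L. ((\<lambda>x. ereal (u x)) \<longlongrightarrow> L) (at_left_ereal b)"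
proof -
  let ?S = "{y. z < y \<and> ereal y < b}"
  define L where "L = (SUP y\<in>?S. ereal (u y))"
  have "((\<lambda>x. ereal (u x)) \<longlongrightarrow> L) (at_left_ereal b)"
  proof (rule increasing_tendsto)
    show "eventually (\<lambda>n. ereal (u n) \<le> L) (at_left_ereal b)"
      using ev_left[OF assms(1)] by eventually_elim (auto simp: L_def intro!: SUP_upper)
    fix x assume "x < L"
    then obtain y where y: "y \<in> ?S" "x < ereal (u y)" unfolding L_def less_SUP_iff by auto
    show "eventually (\<lambda>n. x < ereal (u n)) (at_left_ereal b)"
      using ev_left[of y b] y
    proof (auto elim!: eventually_mono)
      fix n assume "ereal n < b" "y < n"
      then have "u y \<le> u n" using assms(2)[of y n] y by auto
      then show "x < ereal (u n)" using y(2) by (meson ereal_less_eq(3) less_le_trans)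
    qed
  qed
  then show ?thesis by blast
qed

lemma anti_lim:
  assumes "ereal z < b" "\<And>x y. z < x \<Longrightarrow> x < y \<Longrightarrow> ereal y < b \<Longrightarrow> u y \<le> u x"
  shows "\<exists>L. ((\<lambda>x. ereal (u x)) \<longlongrightarrow> L) (at_left_ereal b)"
proof -
  obtain L where "((\<lambda>x. ereal (- u x)) \<longlongrightarrow> L) (at_left_ereal b)"
    using mono_lim[of z b "\<lambda>x. - u x"] assms by force
  then have "((\<lambda>x. - ereal (- u x)) \<longlongrightarrow> - L) (at_left_ereal b)"
    by (rule tendsto_uminus_ereal)
  then show ?thesis by auto
qed


lemma core:
  fixes a b :: ereal and f g h :: "real \<Rightarrow> real" and c lam :: real
  assumes c: "c \<in> eint a b"
  and mvt: "\<And>z x. z \<in> eint a b \<Longrightarrow> x \<in> eint a b \<Longrightarrow> z < x \<Longrightarrow>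
              \<exists>\<xi>. z < \<xi> \<and> \<xi> < x \<and> f x - f z = h \<xi> * (g x - g z)"
  and rat: "\<And>z x. z \<in> eint a b \<Longrightarrow> x \<in> eint a b \<Longrightarrow> z < x \<Longrightarrow> 0 < g z / g x \<and> g z / g x < 1"
  and inc: "strictly_incr_on (eint a (ereal c)) h"
  and dec: "strictly_decr_on (eint (ereal c) b) h"
  and f0: "(f \<longlongrightarrow> 0) (at_right_ereal a)" and g0: "(g \<longlongrightarrow> 0) (at_right_ereal a)"
  and lim: "((\<lambda>x. f x / g x) \<longlongrightarrow> lam) (at_right_ereal a)"
  shows "(\<forall>x\<in>eint a b. f x / g x > lam) \<longleftrightarrow>
         (\<exists>L. ((\<lambda>x. ereal (f x / g x)) \<longlongrightarrow> L) (at_left_ereal b) \<and> L \<ge> ereal lam)"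
proof -
  define \<phi> where "\<phi> x = f x / g x" for x
  have ab: "a \<noteq> \<infinity>" "b \<noteq> -\<infinity>" "a < ereal c" "ereal c < b" using c by (auto simp: eint_def)
  have inI: "x \<in> eint a b \<longleftrightarrow> a < ereal x \<and> ereal x < b" for x by (simp add: eint_def)
  have incD: "h x < h y" if "a < ereal x" "x < y" "y < c" for x y
    using inc that tr1[of a x y] by (auto simp: strictly_incr_on_def eint_def)
  have decD: "h x > h y" if "c < x" "x < y" "ereal y < b" for x y
    using dec that tr2[of y b x] by (auto simp: strictly_decr_on_def eint_def)
  have M: "\<exists>\<xi> t. z < \<xi> \<and> \<xi> < x \<and> 0 < t \<and> t < 1 \<and> \<phi> x - \<phi> z = t * (h \<xi> - \<phi> z)
              \<and> \<phi> x - h \<xi> = (1 - t) * (\<phi> z - h \<xi>)"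
    if zx: "z \<in> eint a b" "x \<in> eint a b" "z < x" for z x
  proof -
    obtain \<xi> where \<xi>: "z < \<xi>" "\<xi> < x" "f x - f z = h \<xi> * (g x - g z)" using mvt[OF zx] by blast
    have r: "0 < g z / g x" "g z / g x < 1" using rat[OF zx] by auto
    then have gx: "g x \<noteq> 0" and gz: "g z \<noteq> 0" by auto
    have e: "\<phi> x = (g z / g x) * \<phi> z + (1 - g z / g x) * h \<xi>"
      using \<xi>(3) gx gz by (simp add: \<phi>_def field_simps)
    define t where "t = 1 - g z / g x"
    have "z < \<xi> \<and> \<xi> < x \<and> 0 < t \<and> t < 1 \<and> \<phi> x - \<phi> z = t * (h \<xi> - \<phi> z)
              \<and> \<phi> x - h \<xi> = (1 - t) * (\<phi> z - h \<xi>)" using \<xi> r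
      by (auto simp: e t_def) (simp_all add: field_simps gx)
    then show ?thesis by blast
  qed
  have gnz: "g x \<noteq> 0" if "x \<in> eint a b" for x
    using ex_left[OF that] rat[of _ x] that by force
  have F1: "\<phi> x \<le> h x" if x: "a < ereal x" "x < c" for x
  proof -
    have xI: "x \<in> eint a b" using x ab tr2[of c b x] by (auto simp: eint_def)
    have gx: "g x \<noteq> 0" using gnz[OF xI] .
    have T: "((\<lambda>y. ((f x - f y) - h x * (g x - g y)) / g x) \<longlongrightarrow> ((f x - 0) - h x * (g x - 0)) / g x)
             (at_right_ereal a)"
      by (intro tendsto_intros f0 g0 gx)
    have ev: "eventually (\<lambda>y. ((f x - f y) - h x * (g x - g y)) / g x \<le> 0) (at_right_ereal a)"
      using ev_right[OF x(1)]
    proof eventually_elim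
      case (elim y)
      then have yI: "y \<in> eint a b" using xI tr2[of x b y] by (auto simp: eint_def)
      obtain \<xi> where \<xi>: "y < \<xi>" "\<xi> < x" "f x - f y = h \<xi> * (g x - g y)"
        using mvt[OF yI xI] elim by blast
      have "h \<xi> < h x" using incD[of \<xi> x] \<xi> elim x tr1[of a y \<xi>] by auto
      moreover have "0 < 1 - g y / g x" using rat[OF yI xI] elim by auto
      moreover have "((f x - f y) - h x * (g x - g y)) / g x = (h \<xi> - h x) * (1 - g y / g x)"
        using \<xi>(3) gx by (simp add: field_simps)
      ultimately show ?case by (simp add: mult_neg_pos less_imp_le)
    qed
    have "((f x - 0) - h x * (g x - 0)) / g x \<le> 0"
      by (rule tendsto_upperbound[OF T ev]) (simp add: ab nb_right nb_left)
    then show ?thesis using gx by (simp add: \<phi>_def diff_divide_distrib)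
  qed
  have F2: "\<phi> z < \<phi> x" if H: "a < ereal z" "z < x" "x < c" for z x
  proof -
    have I: "z \<in> eint a b" "x \<in> eint a b" using H ab tr2[of c b] tr1[of a z x] by (auto simp: eint_def)
    obtain \<xi> t where m: "z < \<xi>" "\<xi> < x" "0 < t" "t < 1" "\<phi> x - \<phi> z = t * (h \<xi> - \<phi> z)"
      using M[OF I H(2)] by blast
    have "\<phi> z \<le> h z" using F1 H by auto
    moreover have "h z < h \<xi>" using incD[of z \<xi>] H m by auto
    ultimately have "t * (h \<xi> - \<phi> z) > 0" using m by simp
    then show ?thesis using m by linarith
  qed
  have lamle: "lam \<le> \<phi> z" if "a < ereal z" "z < c" for z
  proof (rule tendsto_upperbound[OF lim[folded \<phi>_def]])
    show "eventually (\<lambda>y. \<phi> y \<le> \<phi> z) (at_right_ereal a)"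
      using ev_right[OF that(1)] by eventually_elim (use F2 that in force)
  qed (simp add: ab nb_right nb_left)
  have F3: "lam < \<phi> x" if "a < ereal x" "x < c" for x
  proof -
    have "x \<in> eint a b" using that ab tr2[of c b] by (auto simp: eint_def)
    then obtain z where z: "z \<in> eint a b" "z < x" using ex_left by blast
    then have "\<phi> z < \<phi> x" "lam \<le> \<phi> z" using F2[of z x] lamle[of z] that by (auto simp: eint_def)
    then show ?thesis by simp
  qed
  have F4: "lam < \<phi> c"
  proof -
    obtain y where y: "y \<in> eint a b" "y < c" using ex_left[OF c] by blast
    obtain \<xi> t where m: "y < \<xi>" "\<xi> < c" "0 < t" "t < 1" "\<phi> c - \<phi> y = t * (h \<xi> - \<phi> y)"
      using M[OF y(1) c y(2)] by blast
    have "\<phi> y \<le> h y" "lam < \<phi> y" using F1 F3 y by (auto simp: eint_def)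
    moreover have "h y < h \<xi>" using incD[of y \<xi>] y m by (auto simp: eint_def)
    ultimately have "t * (h \<xi> - \<phi> y) > 0" using m by simp
    then show ?thesis using m \<open>lam < \<phi> y\<close> by linarith
  qed
  have F5: "\<phi> x < \<phi> z \<and> h x < \<phi> x"
    if H: "c < z" "h z \<le> \<phi> z" "z < x" "ereal x < b" for z x
  proof -
    have I: "z \<in> eint a b" "x \<in> eint a b" using H ab tr1[of a c] tr2[of x b z] by (auto simp: eint_def)
    obtain \<xi> t where m: "z < \<xi>" "\<xi> < x" "0 < t" "t < 1" "\<phi> x - \<phi> z = t * (h \<xi> - \<phi> z)"
      "\<phi> x - h \<xi> = (1 - t) * (\<phi> z - h \<xi>)"
      using M[OF I H(3)] by blast
    have 1: "h \<xi> < h z" using decD[of z \<xi>] H m tr2[of x b \<xi>] by auto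
    have 2: "h x < h \<xi>" using decD[of \<xi> x] H m by auto
    have 3: "t * (h \<xi> - \<phi> z) < 0" using m 1 H by (simp add: mult_pos_neg)
    have 4: "(1 - t) * (\<phi> z - h \<xi>) > 0" using m 1 H by simp
    have "\<phi> x - \<phi> z < 0" using 3 m(5) by simp
    moreover have "\<phi> x - h \<xi> > 0" using 4 m(6) by simp
    ultimately show ?thesis using 2 by linarith
  qed
  have F6: "\<phi> y < \<phi> x" if H: "c \<le> y" "y < x" "ereal x < b" "\<phi> x < h x" for y x
  proof -
    have I: "y \<in> eint a b" "x \<in> eint a b" using H ab tr1[of a c] tr2[of x b y] by (auto simp: eint_def)
    obtain \<xi> t where m: "y < \<xi>" "\<xi> < x" "0 < t" "t < 1" "\<phi> x - \<phi> y = t * (h \<xi> - \<phi> y)"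
      "\<phi> x - h \<xi> = (1 - t) * (\<phi> y - h \<xi>)"
      using M[OF I H(2)] by blast
    have "h x < h \<xi>" using decD[of \<xi> x] H m by auto
    then have "\<phi> x - h \<xi> < 0" using H(4) by linarith
    then have "(1 - t) * (\<phi> y - h \<xi>) < 0" using m(6) by simp
    then have "\<phi> y - h \<xi> < 0" using m(3,4) by (simp add: mult_less_0_iff)
    then have "t * (h \<xi> - \<phi> y) > 0" using m(3) by simp
    then have "\<phi> x - \<phi> y > 0" using m(5) by simp
    then show ?thesis by simp
  qed
  show ?thesis unfolding \<phi>_def[symmetric]
  proof
    assume all: "\<forall>x\<in>eint a b. lam < \<phi> x"
    have "\<exists>L. ((\<lambda>x. ereal (\<phi> x)) \<longlongrightarrow> L) (at_left_ereal b)"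
    proof (cases "\<exists>z. c < z \<and> ereal z < b \<and> h z \<le> \<phi> z")
      case True
      then obtain z where z: "c < z" "ereal z < b" "h z \<le> \<phi> z" by blast
      show ?thesis
      proof (rule anti_lim[OF z(2)])
        fix x y assume xy: "z < x" "x < y" "ereal y < b"
        have "h x < \<phi> x" using F5[of z x] z xy tr2[of y b x] by auto
        then show "\<phi> y \<le> \<phi> x" using F5[of x y] z xy by auto
      qed
    next
      case False
      show ?thesis
      proof (rule mono_lim[OF ab(4)])
        fix x y assume xy: "c < x" "x < y" "ereal y < b"
        then show "\<phi> x \<le> \<phi> y" using F6[of x y] False by force
      qed
    qed
    then obtain L where L: "((\<lambda>x. ereal (\<phi> x)) \<longlongrightarrow> L) (at_left_ereal b)" by blast
    have "ereal lam \<le> L"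
    proof (rule tendsto_lowerbound[OF L])
      show "eventually (\<lambda>y. ereal lam \<le> ereal (\<phi> y)) (at_left_ereal b)"
        using ev_left[OF ab(4)] proof eventually_elim
        case (elim y)
        then have "y \<in> eint a b" using ab tr1[of a c y] by (auto simp: eint_def)
        then show ?case using all by (simp add: less_imp_le)
      qed
    qed (simp add: ab nb_right nb_left)
    then show "\<exists>L. ((\<lambda>x. ereal (\<phi> x)) \<longlongrightarrow> L) (at_left_ereal b) \<and> ereal lam \<le> L" using L by blast
  next
    assume "\<exists>L. ((\<lambda>x. ereal (\<phi> x)) \<longlongrightarrow> L) (at_left_ereal b) \<and> ereal lam \<le> L"
    then obtain L where L: "((\<lambda>x. ereal (\<phi> x)) \<longlongrightarrow> L) (at_left_ereal b)" "ereal lam \<le> L" by blast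
    show "\<forall>x\<in>eint a b. lam < \<phi> x"
    proof
      fix x assume xI: "x \<in> eint a b"
      consider "x < c" | "x = c" | "c < x" "\<phi> x < h x" | "c < x" "h x \<le> \<phi> x" by force
      then show "lam < \<phi> x"
      proof cases
        case 1 then show ?thesis using F3 xI by (auto simp: eint_def)
      next
        case 2 then show ?thesis using F4 by simp
      next
        case 3 then show ?thesis using F6[of c x] F4 xI by (auto simp: eint_def)
      next
        case 4
        obtain x' where x': "x' \<in> eint a b" "x < x'" using ex_right[OF xI] by blast
        have x'b: "ereal x' < b" using x' by (simp add: eint_def)
        have 1: "\<phi> x' < \<phi> x" "h x' < \<phi> x'" using F5[of x x'] 4 x' x'b by auto
        have "L \<le> ereal (\<phi> x')"
        proof (rule tendsto_upperbound[OF L(1)])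
          show "eventually (\<lambda>y. ereal (\<phi> y) \<le> ereal (\<phi> x')) (at_left_ereal b)"
            using ev_left[OF x'b] by eventually_elim (use F5[of x'] 1 4 x' in force)
        qed (simp add: ab nb_right nb_left)
        then have "ereal lam \<le> ereal (\<phi> x')" using L(2) by (rule order_trans[rotated])
        then show ?thesis using 1 by simp
      qed
    qed
  qed
qed


lemma pos_a:
  fixes g :: "real \<Rightarrow> real"
  assumes m: "strict_mono_on (eint a b) g" and g0: "(g \<longlongrightarrow> 0) (at_right_ereal a)"
    and x: "x \<in> eint a b"
  shows "0 < g x"
proof -
  obtain w where w: "w \<in> eint a b" "w < x" using ex_left[OF x] by blast
  have aw: "a < ereal w" "a \<noteq> \<infinity>" using w by (auto simp: eint_def)
  have "0 \<le> g w"
  proof (rule tendsto_upperbound[OF g0])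
    show "eventually (\<lambda>y. g y \<le> g w) (at_right_ereal a)"
      using ev_right[OF aw(1)]
    proof eventually_elim
      case (elim y)
      then have "y \<in> eint a b" using w tr2[of w b y] by (auto simp: eint_def)
      then show ?case using strict_mono_onD[OF m _ w(1)] elim by force
    qed
  qed (simp add: nb_right aw)
  then show ?thesis using strict_mono_onD[OF m w(1) x w(2)] by simp
qed

lemma rat_a:
  fixes g :: "real \<Rightarrow> real"
  assumes m: "strict_mono_on (eint a b) g \<or> strict_antimono_on (eint a b) g"
    and g0: "(g \<longlongrightarrow> 0) (at_right_ereal a)"
    and zx: "z \<in> eint a b" "x \<in> eint a b" "z < x"
  shows "0 < g z / g x \<and> g z / g x < 1"
proof -
  have *: "0 < G z / G x \<and> G z / G x < 1" if "strict_mono_on (eint a b) G" "(G \<longlongrightarrow> 0) (at_right_ereal a)" for G :: "real \<Rightarrow> real"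
  proof -
    have "0 < G z" "0 < G x" "G z < G x" using pos_a[OF that] zx strict_mono_onD[OF that(1) zx] by auto
    then show ?thesis by simp
  qed
  show ?thesis
  proof (cases "strict_mono_on (eint a b) g")
    case True then show ?thesis using * g0 by blast
  next
    case False
    then have "strict_antimono_on (eint a b) g" using m by blast
    then have "strict_mono_on (eint a b) (\<lambda>x. - g x)"
      by (auto simp: monotone_on_def)
    moreover have "((\<lambda>x. - g x) \<longlongrightarrow> 0) (at_right_ereal a)" using tendsto_minus[OF g0] by simp
    ultimately show ?thesis using *[of "\<lambda>x. - g x"] by simp
  qed
qed

lemma wrap_a:
  fixes a b :: ereal and f g h :: "real \<Rightarrow> real" and c lam :: real
  assumes c: "c \<in> eint a b"
  and mvt: "\<And>z x. z \<in> eint a b \<Longrightarrow> x \<in> eint a b \<Longrightarrow> z < x \<Longrightarrow>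
              \<exists>\<xi>. z < \<xi> \<and> \<xi> < x \<and> f x - f z = h \<xi> * (g x - g z)"
  and m: "strict_mono_on (eint a b) g \<or> strict_antimono_on (eint a b) g"
  and inc: "strictly_incr_on (eint a (ereal c)) h"
  and dec: "strictly_decr_on (eint (ereal c) b) h"
  and f0: "(f \<longlongrightarrow> 0) (at_right_ereal a)" and g0: "(g \<longlongrightarrow> 0) (at_right_ereal a)"
  and lim: "((\<lambda>x. f x / g x) \<longlongrightarrow> lam) (at_right_ereal a)"
  shows "(\<forall>x\<in>eint a b. f x / g x > lam) \<longleftrightarrow>
         (\<exists>L. ((\<lambda>x. ereal (f x / g x)) \<longlongrightarrow> L) (at_left_ereal b) \<and> L \<ge> ereal lam)"
  by (rule core[OF c mvt rat_a[OF m g0] inc dec f0 g0 lim])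

lemma wrap_b:
  fixes a b :: ereal and f g h :: "real \<Rightarrow> real" and c lam :: real
  assumes c: "c \<in> eint a b"
  and mvt: "\<And>z x. z \<in> eint a b \<Longrightarrow> x \<in> eint a b \<Longrightarrow> z < x \<Longrightarrow>
              \<exists>\<xi>. z < \<xi> \<and> \<xi> < x \<and> f x - f z = h \<xi> * (g x - g z)"
  and m: "strict_mono_on (eint a b) g \<or> strict_antimono_on (eint a b) g"
  and inc: "strictly_incr_on (eint a (ereal c)) h"
  and dec: "strictly_decr_on (eint (ereal c) b) h"
  and f0: "(f \<longlongrightarrow> 0) (at_left_ereal b)" and g0: "(g \<longlongrightarrow> 0) (at_left_ereal b)"
  and lim: "((\<lambda>x. f x / g x) \<longlongrightarrow> lam) (at_left_ereal b)"
  shows "(\<forall>x\<in>eint a b. f x / g x > lam) \<longleftrightarrow>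
         (\<exists>L. ((\<lambda>x. ereal (f x / g x)) \<longlongrightarrow> L) (at_right_ereal a) \<and> L \<ge> ereal lam)"
proof -
  have ab: "a \<noteq> \<infinity>" "b \<noteq> -\<infinity>" using c by (auto simp: eint_def)
  let ?f = "\<lambda>x. f (- x)" and ?g = "\<lambda>x. g (- x)" and ?h = "\<lambda>x. h (- x)"
  have R: "x \<in> eint (-b) (-a) \<longleftrightarrow> -x \<in> eint a b" for x by (rule refl_eint)
  have "(\<forall>x\<in>eint (-b) (-a). ?f x / ?g x > lam) \<longleftrightarrow>
         (\<exists>L. ((\<lambda>x. ereal (?f x / ?g x)) \<longlongrightarrow> L) (at_left_ereal (-a)) \<and> L \<ge> ereal lam)"
  proof (rule wrap_a[of "-c"])
    show "- c \<in> eint (- b) (- a)" using R c by simp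
    show "\<exists>\<xi>. z < \<xi> \<and> \<xi> < x \<and> ?f x - ?f z = ?h \<xi> * (?g x - ?g z)"
      if "z \<in> eint (- b) (- a)" "x \<in> eint (- b) (- a)" "z < x" for z x
    proof -
      have "-x \<in> eint a b" "-z \<in> eint a b" "-x < -z" using that R by auto
      then obtain \<xi> where "-x < \<xi>" "\<xi> < -z" "f (-z) - f (-x) = h \<xi> * (g (-z) - g (-x))"
        using mvt by blast
      then show ?thesis by (intro exI[of _ "-\<xi>"]) (auto simp: algebra_simps)
    qed
    show "strict_mono_on (eint (- b) (- a)) ?g \<or> strict_antimono_on (eint (- b) (- a)) ?g"
      using m by (auto simp: monotone_on_def R)
    show "strictly_incr_on (eint (- b) (ereal (- c))) ?h"
      using dec refl_eint[of _ b "ereal c"] by (auto simp: strictly_incr_on_def strictly_decr_on_def)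
    show "strictly_decr_on (eint (ereal (- c)) (- a)) ?h"
      using inc refl_eint[of _ "ereal c" a] by (auto simp: strictly_incr_on_def strictly_decr_on_def)
    show "(?f \<longlongrightarrow> 0) (at_right_ereal (- b))"
      using f0 by (simp add: refl_right[OF ab(2)] filterlim_filtermap)
    show "(?g \<longlongrightarrow> 0) (at_right_ereal (- b))"
      using g0 by (simp add: refl_right[OF ab(2)] filterlim_filtermap)
    show "((\<lambda>x. ?f x / ?g x) \<longlongrightarrow> lam) (at_right_ereal (- b))"
      using lim by (simp add: refl_right[OF ab(2)] filterlim_filtermap)
  qed
  moreover have "(\<forall>x\<in>eint (-b) (-a). ?f x / ?g x > lam) \<longleftrightarrow> (\<forall>x\<in>eint a b. f x / g x > lam)"
    using R by (metis minus_minus)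
  ultimately show ?thesis
    by (simp add: refl_left[OF ab(1)] filterlim_filtermap)
qed

lemma negconv:
  "(\<exists>L. ((\<lambda>x. ereal (- f x / g x)) \<longlongrightarrow> L) F \<and> L \<ge> ereal (- lam)) \<longleftrightarrow>
   (\<exists>L. ((\<lambda>x. ereal (f x / g x)) \<longlongrightarrow> L) F \<and> L \<le> ereal lam)"
proof -
  have e: "(\<lambda>x. ereal (- f x / g x)) = (\<lambda>x. - ereal (f x / g x))" by auto
  show ?thesis unfolding e
  proof
    assume "\<exists>L. ((\<lambda>x. - ereal (f x / g x)) \<longlongrightarrow> L) F \<and> ereal (- lam) \<le> L"
    then obtain L where L: "((\<lambda>x. - ereal (f x / g x)) \<longlongrightarrow> L) F" "ereal (- lam) \<le> L" by blast
    have "((\<lambda>x. ereal (f x / g x)) \<longlongrightarrow> - L) F" using tendsto_uminus_ereal[OF L(1)] by simp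
    moreover have "- L \<le> ereal lam"
      using L(2) by (cases L) auto
    ultimately show "\<exists>L. ((\<lambda>x. ereal (f x / g x)) \<longlongrightarrow> L) F \<and> L \<le> ereal lam" by blast
  next
    assume "\<exists>L. ((\<lambda>x. ereal (f x / g x)) \<longlongrightarrow> L) F \<and> L \<le> ereal lam"
    then obtain L where L: "((\<lambda>x. ereal (f x / g x)) \<longlongrightarrow> L) F" "L \<le> ereal lam" by blast
    have "((\<lambda>x. - ereal (f x / g x)) \<longlongrightarrow> - L) F" using tendsto_uminus_ereal[OF L(1)] by simp
    moreover have "ereal (- lam) \<le> - L" using L(2) by (cases L) auto
    ultimately show "\<exists>L. ((\<lambda>x. - ereal (f x / g x)) \<longlongrightarrow> L) F \<and> ereal (- lam) \<le> L" by blast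
  qed
qed

theorem mainTheorem5:
  fixes a b :: ereal and f g :: "real \<Rightarrow> real" and c lam :: real
  assumes ab: "a < b"
    and fdiff: "\<forall>x\<in>eint a b. f differentiable (at x)"
    and gdiff: "\<forall>x\<in>eint a b. g differentiable (at x)"
    and g'nz: "\<forall>x\<in>eint a b. deriv g x \<noteq> 0"
    and c: "c \<in> eint a b"
    and cases: "(strictly_incr_on (eint a (ereal c)) (\<lambda>x. deriv f x / deriv g x) \<and>
                 strictly_decr_on (eint (ereal c) b) (\<lambda>x. deriv f x / deriv g x))
              \<or> (strictly_decr_on (eint a (ereal c)) (\<lambda>x. deriv f x / deriv g x) \<and>
                 strictly_incr_on (eint (ereal c) b) (\<lambda>x. deriv f x / deriv g x))"
  shows
    "(((f \<longlongrightarrow> 0) (at_right_ereal a) \<and> (g \<longlongrightarrow> 0) (at_right_ereal a) \<and>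
      ((\<lambda>x. f x / g x) \<longlongrightarrow> lam) (at_right_ereal a)) \<longrightarrow>
       ((strictly_incr_on (eint a (ereal c)) (\<lambda>x. deriv f x / deriv g x) \<and>
         strictly_decr_on (eint (ereal c) b) (\<lambda>x. deriv f x / deriv g x)) \<longrightarrow>
          ((\<forall>x\<in>eint a b. f x / g x > lam) \<longleftrightarrow>
           (\<exists>L::ereal. ((\<lambda>x. ereal (f x / g x)) \<longlongrightarrow> L) (at_left_ereal b) \<and> L \<ge> ereal lam)))
     \<and> ((strictly_decr_on (eint a (ereal c)) (\<lambda>x. deriv f x / deriv g x) \<and>
         strictly_incr_on (eint (ereal c) b) (\<lambda>x. deriv f x / deriv g x)) \<longrightarrow>
          ((\<forall>x\<in>eint a b. f x / g x < lam) \<longleftrightarrow>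
           (\<exists>L::ereal. ((\<lambda>x. ereal (f x / g x)) \<longlongrightarrow> L) (at_left_ereal b) \<and> L \<le> ereal lam))))
   \<and> (((f \<longlongrightarrow> 0) (at_left_ereal b) \<and> (g \<longlongrightarrow> 0) (at_left_ereal b) \<and>
      ((\<lambda>x. f x / g x) \<longlongrightarrow> lam) (at_left_ereal b)) \<longrightarrow>
       ((strictly_incr_on (eint a (ereal c)) (\<lambda>x. deriv f x / deriv g x) \<and>
         strictly_decr_on (eint (ereal c) b) (\<lambda>x. deriv f x / deriv g x)) \<longrightarrow>
          ((\<forall>x\<in>eint a b. f x / g x > lam) \<longleftrightarrow>
           (\<exists>L::ereal. ((\<lambda>x. ereal (f x / g x)) \<longlongrightarrow> L) (at_right_ereal a) \<and> L \<ge> ereal lam)))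
     \<and> ((strictly_decr_on (eint a (ereal c)) (\<lambda>x. deriv f x / deriv g x) \<and>
         strictly_incr_on (eint (ereal c) b) (\<lambda>x. deriv f x / deriv g x)) \<longrightarrow>
          ((\<forall>x\<in>eint a b. f x / g x < lam) \<longleftrightarrow>
           (\<exists>L::ereal. ((\<lambda>x. ereal (f x / g x)) \<longlongrightarrow> L) (at_right_ereal a) \<and> L \<le> ereal lam))))"
proof -
  let ?h = "\<lambda>x. deriv f x / deriv g x"
  let ?I = "eint a b"
  have conv: "t \<in> ?I" if "z \<in> ?I" "x \<in> ?I" "z \<le> t" "t \<le> x" for z x t
    using that tr1[of a z t] tr2[of x b t] by (auto simp: eint_def)
  have contf: "isCont f t" if "t \<in> ?I" for t
    using fdiff that differentiable_imp_continuous_within by blast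
  have contg: "isCont g t" if "t \<in> ?I" for t
    using gdiff that differentiable_imp_continuous_within by blast
  have derf: "DERIV f t :> deriv f t" if "t \<in> ?I" for t
    using fdiff that DERIV_deriv_iff_real_differentiable by blast
  have derg: "DERIV g t :> deriv g t" if "t \<in> ?I" for t
    using gdiff that DERIV_deriv_iff_real_differentiable by blast
  have mvt: "\<exists>\<xi>. z < \<xi> \<and> \<xi> < x \<and> f x - f z = ?h \<xi> * (g x - g z)"
    if zx: "z \<in> ?I" "x \<in> ?I" "z < x" for z x
  proof -
    have "\<exists>\<xi>. z < \<xi> \<and> \<xi> < x \<and> (f x - f z) * deriv g \<xi> = (g x - g z) * deriv f \<xi>"
      by (rule GMVT'[OF zx(3)]) (use conv[OF zx(1,2)] contf contg derf derg in \<open>auto simp: less_imp_le\<close>)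
    then obtain \<xi> where \<xi>: "z < \<xi>" "\<xi> < x" "(f x - f z) * deriv g \<xi> = (g x - g z) * deriv f \<xi>" by blast
    have "\<xi> \<in> ?I" using conv[OF zx(1,2)] \<xi> by auto
    then have "deriv g \<xi> \<noteq> 0" using g'nz by blast
    then have "f x - f z = ?h \<xi> * (g x - g z)" using \<xi>(3) by (simp add: field_simps)
    then show ?thesis using \<xi> by blast
  qed
  have neq: "g z \<noteq> g x" if zx: "z \<in> ?I" "x \<in> ?I" "z < x" for z x
  proof
    assume eq: "g z = g x"
    have "\<exists>\<xi>. z < \<xi> \<and> \<xi> < x \<and> (x - z) * deriv g \<xi> = (g x - g z) * 1"
      by (rule GMVT'[OF zx(3)]) (use conv[OF zx(1,2)] contg derg in \<open>auto simp: less_imp_le\<close>)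
    then obtain \<xi> where \<xi>: "z < \<xi>" "\<xi> < x" "(x - z) * deriv g \<xi> = (g x - g z) * 1" by blast
    have "\<xi> \<in> ?I" using conv[OF zx(1,2)] \<xi> by auto
    then have "deriv g \<xi> \<noteq> 0" using g'nz by blast
    then show False using \<xi> eq zx(3) by simp
  qed
  have inj: "inj_on g ?I"
    by (rule inj_onI) (metis neq linorder_neq_iff)
  have ival: "is_interval ?I"
    unfolding is_interval_1 using conv by blast
  have cont: "continuous_on ?I g"
    using contg by (simp add: continuous_at_imp_continuous_on)
  have mono: "strict_mono_on ?I g \<or> strict_antimono_on ?I g"
    using injective_eq_monotone_map[OF ival cont] inj by blast
  have nmvt: "\<exists>\<xi>. z < \<xi> \<and> \<xi> < x \<and> (- f x) - (- f z) = (- ?h \<xi>) * (g x - g z)"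
    if "z \<in> ?I" "x \<in> ?I" "z < x" for z x
    using mvt[OF that] by (auto simp: algebra_simps)
  have incn: "strictly_incr_on S (\<lambda>x. - ?h x)" if "strictly_decr_on S ?h" for S
    using that by (auto simp: strictly_incr_on_def strictly_decr_on_def)
  have decn: "strictly_decr_on S (\<lambda>x. - ?h x)" if "strictly_incr_on S ?h" for S
    using that by (auto simp: strictly_incr_on_def strictly_decr_on_def)
  have limn: "((\<lambda>x. - f x / g x) \<longlongrightarrow> - lam) F" if "((\<lambda>x. f x / g x) \<longlongrightarrow> lam) F" for F
    using tendsto_minus[OF that] by simp
  have f0n: "((\<lambda>x. - f x) \<longlongrightarrow> 0) F" if "(f \<longlongrightarrow> 0) F" for F
    using tendsto_minus[OF that] by (metis minus_zero)
  have alln: "(\<forall>x\<in>?I. - f x / g x > - lam) \<longleftrightarrow> (\<forall>x\<in>?I. f x / g x < lam)"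
    by simp
  show ?thesis
  proof (intro conjI impI; elim conjE)
    assume f0: "(f \<longlongrightarrow> 0) (at_right_ereal a)" and g0: "(g \<longlongrightarrow> 0) (at_right_ereal a)"
      and lim: "((\<lambda>x. f x / g x) \<longlongrightarrow> lam) (at_right_ereal a)"
    {
      assume I1: "strictly_incr_on (eint a (ereal c)) ?h" and I2: "strictly_decr_on (eint (ereal c) b) ?h"
      show "(\<forall>x\<in>?I. f x / g x > lam) \<longleftrightarrow>
           (\<exists>L::ereal. ((\<lambda>x. ereal (f x / g x)) \<longlongrightarrow> L) (at_left_ereal b) \<and> L \<ge> ereal lam)"
        by (rule wrap_a[OF c mvt mono I1 I2 f0 g0 lim])
    }
    {
      assume I1: "strictly_decr_on (eint a (ereal c)) ?h" and I2: "strictly_incr_on (eint (ereal c) b) ?h"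
      have "(\<forall>x\<in>?I. - f x / g x > - lam) \<longleftrightarrow>
           (\<exists>L::ereal. ((\<lambda>x. ereal (- f x / g x)) \<longlongrightarrow> L) (at_left_ereal b) \<and> L \<ge> ereal (- lam))"
        by (rule wrap_a[OF c nmvt mono incn[OF I1] decn[OF I2] f0n[OF f0] g0 limn[OF lim]])
      then show "(\<forall>x\<in>?I. f x / g x < lam) \<longleftrightarrow>
           (\<exists>L::ereal. ((\<lambda>x. ereal (f x / g x)) \<longlongrightarrow> L) (at_left_ereal b) \<and> L \<le> ereal lam)"
        unfolding alln negconv .
    }
  next
    assume f0: "(f \<longlongrightarrow> 0) (at_left_ereal b)" and g0: "(g \<longlongrightarrow> 0) (at_left_ereal b)"
      and lim: "((\<lambda>x. f x / g x) \<longlongrightarrow> lam) (at_left_ereal b)"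
    {
      assume I1: "strictly_incr_on (eint a (ereal c)) ?h" and I2: "strictly_decr_on (eint (ereal c) b) ?h"
      show "(\<forall>x\<in>?I. f x / g x > lam) \<longleftrightarrow>
           (\<exists>L::ereal. ((\<lambda>x. ereal (f x / g x)) \<longlongrightarrow> L) (at_right_ereal a) \<and> L \<ge> ereal lam)"
        by (rule wrap_b[OF c mvt mono I1 I2 f0 g0 lim])
    }
    {
      assume I1: "strictly_decr_on (eint a (ereal c)) ?h" and I2: "strictly_incr_on (eint (ereal c) b) ?h"
      have "(\<forall>x\<in>?I. - f x / g x > - lam) \<longleftrightarrow>
           (\<exists>L::ereal. ((\<lambda>x. ereal (- f x / g x)) \<longlongrightarrow> L) (at_right_ereal a) \<and> L \<ge> ereal (- lam))"
        by (rule wrap_b[OF c nmvt mono incn[OF I1] decn[OF I2] f0n[OF f0] g0 limn[OF lim]])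
      then show "(\<forall>x\<in>?I. f x / g x < lam) \<longleftrightarrow>
           (\<exists>L::ereal. ((\<lambda>x. ereal (f x / g x)) \<longlongrightarrow> L) (at_right_ereal a) \<and> L \<le> ereal lam)"
        unfolding alln negconv .
    }
  qed
qed

end
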